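(* Let $D_1$ be an $m\times m$ spherical Euclidean distance matrix (EDM) generated by points that lie on a hypersphere of radius $\rho_1$, and let $D_2$ be an $n\times n$ spherical EDM generated by points that lie on a hypersphere of radius $\rho_2$. Then $D = E_m\otimes D_2 + D_1\otimes E_n$ is a spherical EDM generated by points that lie on a hypersphere of radius $\rho = (\rho_1^2+\rho_2^2)^{1/2}$. Here $E_k$ is the $k\times k$ all-ones matrix and $\otimes$ is the Kronecker product.
   Context: An $N\times N$ matrix $D=(d_{ij})$ is a Euclidean distance matrix (EDM) if there exist points $p^1,\dots,p^N$ in some Euclidean space with $d_{ij}=\|p^i-p^j\|^2$ for all $i,j$; the dimension of their affine span is the embedding dimension $r$ of $D$. An EDM is spherical if it is generated by points lying on a hypersphere. Convention: the generating points of an EDM of embedding dimension $r$ are taken in $\mathbb{R}^r$ (so they affinely span $\mathbb{R}^r$), and the hypersphere is a hypersphere in $\mathbb{R}^r$; its radius is then uniquely determined by the matrix. *)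

theory Defs
  imports Main "HOL-Analysis.Analysis" "Jordan_Normal_Form.Matrix"
begin

text \<open>Points of R^r are represented as functions p :: nat => real, of which only the
  coordinates k < r are relevant. A family of N points is P :: nat => nat => real,
  where P i is the i-th point (i < N).\<close>

definition sqdist :: "nat \<Rightarrow> (nat \<Rightarrow> real) \<Rightarrow> (nat \<Rightarrow> real) \<Rightarrow> real" where
  "sqdist r x y = (\<Sum>k<r. (x k - y k)^2)"

definition generates :: "nat \<Rightarrow> nat \<Rightarrow> (nat \<Rightarrow> nat \<Rightarrow> real) \<Rightarrow> real mat \<Rightarrow> bool" where
  "generates r N P D \<longleftrightarrow> D \<in> carrier_mat N N \<and>
     (\<forall>i<N. \<forall>j<N. D $$ (i, j) = sqdist r (P i) (P j))"

definition is_EDM :: "real mat \<Rightarrow> bool" where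
  "is_EDM D \<longleftrightarrow> (\<exists>N r P. generates r N P D)"

definition affinely_spans :: "nat \<Rightarrow> nat \<Rightarrow> (nat \<Rightarrow> nat \<Rightarrow> real) \<Rightarrow> bool" where
  "affinely_spans r N P \<longleftrightarrow>
     (\<forall>x :: nat \<Rightarrow> real. \<exists>w :: nat \<Rightarrow> real. (\<Sum>i<N. w i) = 1 \<and>
        (\<forall>k<r. x k = (\<Sum>i<N. w i * P i k)))"

text \<open>D is a spherical EDM generated by points lying on a hypersphere of radius rho
  (following the convention: the generating points lie in R^r, affinely span R^r,
  where r is the embedding dimension, and the hypersphere lies in R^r).\<close>
definition spherical_EDM_radius :: "real mat \<Rightarrow> real \<Rightarrow> bool" where
  "spherical_EDM_radius D \<rho> \<longleftrightarrow> \<rho> \<ge> 0 \<and>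
     (\<exists>N r P c. generates r N P D \<and> affinely_spans r N P \<and>
        (\<forall>i<N. sqdist r (P i) c = \<rho>^2))"

definition all_ones_mat :: "nat \<Rightarrow> real mat" where
  "all_ones_mat k = mat k k (\<lambda>_. 1)"

definition kronecker :: "'a::times mat \<Rightarrow> 'a mat \<Rightarrow> 'a mat" where
  "kronecker A B = mat (dim_row A * dim_row B) (dim_col A * dim_col B)
     (\<lambda>(i, j). A $$ (i div dim_row B, j div dim_col B) * B $$ (i mod dim_row B, j mod dim_col B))"

end

theory Submission
  imports Defs
begin

lemma sum_split_add: "(\<Sum>k<a+(b::nat). f k) = (\<Sum>k<a. f k) + (\<Sum>k<b. (f (a+k)::real))"
  by (induction b) (auto simp: add.assoc)

lemma sum_divmod: "(\<Sum>t<m*(n::nat). f t) = (\<Sum>i<m. \<Sum>j<n. (f (i*n+j)::real))"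
proof (induction m)
  case 0 then show ?case by simp
next
  case (Suc m)
  have "(\<Sum>t<Suc m*n. f t) = (\<Sum>t<m*n+n. f t)" by (simp add: add.commute)
  also have "\<dots> = (\<Sum>t<m*n. f t) + (\<Sum>j<n. f (m*n+j))" by (rule sum_split_add)
  finally show ?case using Suc by simp
qed

lemma sum_divmod': "n > 0 \<Longrightarrow> (\<Sum>t<m*n. g (t div n) (t mod n)) = (\<Sum>i<m. \<Sum>j<(n::nat). (g i j :: real))"
  unfolding sum_divmod by (intro sum.cong refl) simp

definition glue :: "nat \<Rightarrow> (nat \<Rightarrow> real) \<Rightarrow> (nat \<Rightarrow> real) \<Rightarrow> nat \<Rightarrow> real" where
  "glue a x y k = (if k < a then x k else y (k - a))"

lemma sqdist_glue: "sqdist (a+b) (glue a x y) (glue a x' y') = sqdist a x x' + sqdist b y y'"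
  unfolding sqdist_def sum_split_add glue_def by simp

theorem theorem5:
  fixes D1 D2 :: "real mat" and m n :: nat and \<rho>1 \<rho>2 :: real
  assumes "D1 \<in> carrier_mat m m" and "spherical_EDM_radius D1 \<rho>1"
    and "D2 \<in> carrier_mat n n" and "spherical_EDM_radius D2 \<rho>2"
  shows "is_EDM (kronecker (all_ones_mat m) D2 + kronecker D1 (all_ones_mat n))
    \<and> spherical_EDM_radius (kronecker (all_ones_mat m) D2 + kronecker D1 (all_ones_mat n))
        (sqrt (\<rho>1^2 + \<rho>2^2))"
proof -
  from assms(2) obtain N1 r1 P1 c1 where r1: "\<rho>1 \<ge> 0" "generates r1 N1 P1 D1"
    "affinely_spans r1 N1 P1" "\<forall>i<N1. sqdist r1 (P1 i) c1 = \<rho>1^2"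
    unfolding spherical_EDM_radius_def by blast
  from assms(4) obtain N2 r2 P2 c2 where r2: "\<rho>2 \<ge> 0" "generates r2 N2 P2 D2"
    "affinely_spans r2 N2 P2" "\<forall>i<N2. sqdist r2 (P2 i) c2 = \<rho>2^2"
    unfolding spherical_EDM_radius_def by blast
  have N1: "N1 = m" using r1(2) assms(1) unfolding generates_def by auto
  have N2: "N2 = n" using r2(2) assms(3) unfolding generates_def by auto
  define D where "D = kronecker (all_ones_mat m) D2 + kronecker D1 (all_ones_mat n)"
  define Q where "Q t = glue r1 (P1 (t div n)) (P2 (t mod n))" for t
  define c where "c = glue r1 c1 c2"
  have dimD: "D \<in> carrier_mat (m*n) (m*n)" using assms(1,3)
    by (simp add: D_def kronecker_def all_ones_mat_def)
  have gen: "generates (r1+r2) (m*n) Q D"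
    unfolding generates_def
  proof (intro conjI allI impI dimD)
    fix i j assume ij: "i < m*n" "j < m*n"
    have "i div n < m" "j div n < m" using ij by (auto simp: less_mult_imp_div_less)
    moreover have "n > 0" using ij by (cases n) auto
    ultimately show "D $$ (i, j) = sqdist (r1+r2) (Q i) (Q j)"
      using ij assms(1,3) r1(2) r2(2) N1 N2
    proof -
      note dims = carrier_matD[OF assms(1)] carrier_matD[OF assms(3)]
      have e1: "kronecker (all_ones_mat m) D2 $$ (i, j) = D2 $$ (i mod n, j mod n)"
        using ij \<open>i div n < m\<close> \<open>j div n < m\<close> dims
        unfolding kronecker_def all_ones_mat_def by (auto simp: index_mat)
      have e2: "kronecker D1 (all_ones_mat n) $$ (i, j) = D1 $$ (i div n, j div n)"
        using ij \<open>i div n < m\<close> \<open>j div n < m\<close> dims \<open>n > 0\<close>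
        unfolding kronecker_def all_ones_mat_def by (auto simp: index_mat)
      have "D $$ (i, j) = kronecker (all_ones_mat m) D2 $$ (i, j) + kronecker D1 (all_ones_mat n) $$ (i, j)"
        using ij dims unfolding D_def by (subst index_add_mat) (auto simp: kronecker_def all_ones_mat_def)
      also have "\<dots> = sqdist r2 (P2 (i mod n)) (P2 (j mod n)) + sqdist r1 (P1 (i div n)) (P1 (j div n))"
        unfolding e1 e2 using r1(2) r2(2) N1 N2 \<open>i div n < m\<close> \<open>j div n < m\<close> \<open>n > 0\<close>
        unfolding generates_def by auto
      also have "\<dots> = sqdist (r1+r2) (Q i) (Q j)" unfolding Q_def sqdist_glue by simp
      finally show ?thesis .
    qed
  qed
  have span: "affinely_spans (r1+r2) (m*n) Q"
    unfolding affinely_spans_def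
  proof
    fix x :: "nat \<Rightarrow> real"
    obtain w1 where w1: "(\<Sum>i<m. w1 i) = 1" "\<forall>k<r1. x k = (\<Sum>i<m. w1 i * P1 i k)"
      using r1(3)[unfolded affinely_spans_def, THEN spec, of x] N1 by auto
    obtain w2 where w2: "(\<Sum>i<n. w2 i) = 1" "\<forall>k<r2. x (r1+k) = (\<Sum>i<n. w2 i * P2 i k)"
      using r2(3)[unfolded affinely_spans_def, THEN spec, of "\<lambda>k. x (r1+k)"] N2 by auto
    define w where "w t = w1 (t div n) * w2 (t mod n)" for t
    have n0: "n > 0" using w2(1) by (cases n) auto
    have "(\<Sum>t<m*n. w t) = (\<Sum>i<m. \<Sum>j<n. w1 i * w2 j)"
      unfolding w_def by (rule sum_divmod'[OF n0])
    also have "\<dots> = (\<Sum>i<m. w1 i * (\<Sum>j<n. w2 j))" by (simp only: sum_distrib_left)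
    also have "\<dots> = 1" using w1(1) w2(1) by simp
    finally have s1: "(\<Sum>t<m*n. w t) = 1" .
    have "x k = (\<Sum>t<m*n. w t * Q t k)" if k: "k < r1+r2" for k
    proof (cases "k < r1")
      case True
      have "(\<Sum>t<m*n. w t * Q t k) = (\<Sum>t<m*n. (\<lambda>i j. (w1 i * P1 i k) * w2 j) (t div n) (t mod n))"
        using True unfolding w_def Q_def glue_def by (intro sum.cong refl) simp
      also have "\<dots> = (\<Sum>i<m. \<Sum>j<n. (w1 i * P1 i k) * w2 j)"
        by (rule sum_divmod'[OF n0])
      also have "\<dots> = (\<Sum>i<m. (w1 i * P1 i k) * (\<Sum>j<n. w2 j))" by (simp only: sum_distrib_left)
      also have "\<dots> = (\<Sum>i<m. w1 i * P1 i k)" using w2(1) by simp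
      finally show ?thesis using w1(2) True by simp
    next
      case False
      have "(\<Sum>t<m*n. w t * Q t k) = (\<Sum>t<m*n. (\<lambda>i j. w1 i * (w2 j * P2 j (k-r1))) (t div n) (t mod n))"
        using False unfolding w_def Q_def glue_def by (intro sum.cong refl) simp
      also have "\<dots> = (\<Sum>i<m. \<Sum>j<n. w1 i * (w2 j * P2 j (k-r1)))"
        by (rule sum_divmod'[OF n0])
      also have "\<dots> = (\<Sum>i<m. w1 i * (\<Sum>j<n. w2 j * P2 j (k-r1)))" by (simp only: sum_distrib_left)
      also have "\<dots> = (\<Sum>i<m. w1 i * x k)"
        using w2(2)[rule_format, of "k-r1"] False k by simp
      also have "\<dots> = x k" using w1(1) by (simp add: sum_distrib_right[symmetric])
      finally show ?thesis by simp
    qed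
    then show "\<exists>w. (\<Sum>i<m*n. w i) = 1 \<and> (\<forall>k<r1+r2. x k = (\<Sum>i<m*n. w i * Q i k))"
      using s1 by blast
  qed
  have sph: "\<forall>i<m*n. sqdist (r1+r2) (Q i) c = (sqrt (\<rho>1^2 + \<rho>2^2))^2"
  proof (intro allI impI)
    fix i assume i: "i < m*n"
    have "i div n < m" using i by (auto simp: less_mult_imp_div_less)
    moreover have "n > 0" using i by (cases n) auto
    ultimately show "sqdist (r1+r2) (Q i) c = (sqrt (\<rho>1^2 + \<rho>2^2))^2"
      using r1(4) r2(4) N1 N2 by (simp add: Q_def c_def sqdist_glue)
  qed
  show ?thesis
    unfolding D_def[symmetric] is_EDM_def spherical_EDM_radius_def
    using gen span sph by auto
qed

end
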